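(* $a_{\{0101,0112,0120\}}(1)=1$, and for all $n\ge2$, $$a_{\{0101,0112,0120\}}(n)=\frac{1}{24}\left(n^4-6n^3+47n^2-114n+120\right).$$
   Context: An ascent in an integer sequence $s_1\cdots s_m$ is an index $j$ with $s_j<s_{j+1}$; $\mathrm{asc}$ denotes the number of ascents. An ascent sequence is a sequence $x_1\cdots x_n$ of nonnegative integers with $x_1=0$ and $x_i\le 1+\mathrm{asc}(x_1\cdots x_{i-1})$ for all $i\ge2$. The reduction $\mathrm{red}(w)$ of an integer sequence $w$ replaces the $i$-th smallest distinct letter of $w$ by $i-1$; a pattern is a reduced sequence. A sequence $x$ contains a pattern $p=p_1\cdots p_k$ if there are indices $i_1<\cdots<i_k$ with $\mathrm{red}(x_{i_1}\cdots x_{i_k})=p$; otherwise $x$ avoids $p$. For a finite set $P$ of patterns, $a_P(n)$ denotes the number of ascent sequences of length $n$ avoiding every pattern in $P$. *)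

theory Defs
  imports Complex_Main
begin

definition asc :: "nat list \<Rightarrow> nat" where
  "asc s = card {j. Suc j < length s \<and> s ! j < s ! Suc j}"

definition is_ascent_seq :: "nat list \<Rightarrow> bool" where
  "is_ascent_seq x \<longleftrightarrow> x \<noteq> [] \<and> x ! 0 = 0 \<and>
     (\<forall>i. 1 \<le> i \<and> i < length x \<longrightarrow> x ! i \<le> 1 + asc (take i x))"

definition red :: "nat list \<Rightarrow> nat list" where
  "red w = map (\<lambda>a. card {b \<in> set w. b < a}) w"

definition contains_pat :: "nat list \<Rightarrow> nat list \<Rightarrow> bool" where
  "contains_pat x p \<longleftrightarrow> (\<exists>I. I \<subseteq> {..<length x} \<and> red (nths x I) = p)"

definition avoids :: "nat list \<Rightarrow> nat list \<Rightarrow> bool" where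
  "avoids x p \<longleftrightarrow> \<not> contains_pat x p"

definition a_P :: "nat list set \<Rightarrow> nat \<Rightarrow> nat" where
  "a_P P n = card {x. is_ascent_seq x \<and> length x = n \<and> (\<forall>p\<in>P. avoids x p)}"

end

theory Submission
  imports Defs "HOL-Library.Sublist"
begin


lemma red_filter: "red w = map (\<lambda>a. card (set (filter (\<lambda>b. b < a) w))) w"
  unfolding red_def by (metis set_filter)

lemma red_simp1: "(a::nat) < b \<Longrightarrow> red [a,b,a,b] = [0,1,0,1]"
  unfolding red_filter by simp
lemma red_simp2: "(a::nat) < b \<Longrightarrow> b < c \<Longrightarrow> red [a,b,b,c] = [0,1,1,2]"
  unfolding red_filter by simp
lemma red_simp3: "(a::nat) < b \<Longrightarrow> b < c \<Longrightarrow> red [a,b,c,a] = [0,1,2,0]"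
  unfolding red_filter by (simp add: card_insert_if)

lemma nths_restrict: "nths x N = nths x (N \<inter> {..<length x})"
  unfolding nths_def
  by (rule arg_cong[where f="map fst"], rule filter_cong) (auto simp: set_zip)

lemma contains_subseq: "contains_pat x p \<longleftrightarrow> (\<exists>s. subseq s x \<and> red s = p)"
  unfolding contains_pat_def subseq_conv_nths
  by (metis inf_le2 nths_restrict)

lemma red_nth: "i < length s \<Longrightarrow> red s ! i = card {b \<in> set s. b < s!i}"
  by (simp add: red_def)

lemma red_less: assumes "i < length s" "j < length s" "s!i < s!j"
  shows "red s ! i < red s ! j"
proof -
  have sub: "{b \<in> set s. b < s!i} \<subseteq> {b \<in> set s. b < s!j}" using assms(3) by auto
  have n1: "s!i \<notin> {b \<in> set s. b < s!i}" by simp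
  have n2: "s!i \<in> {b \<in> set s. b < s!j}" using assms by simp
  have "{b \<in> set s. b < s!i} \<subset> {b \<in> set s. b < s!j}" using sub n1 n2 by blast
  then have "card {b \<in> set s. b < s!i} < card {b \<in> set s. b < s!j}"
    by (rule psubset_card_mono[rotated]) simp
  then show ?thesis using assms by (simp add: red_nth)
qed

lemma red_same: "i < length s \<Longrightarrow> j < length s \<Longrightarrow> s!i = s!j \<Longrightarrow> red s ! i = red s ! j"
  by (simp add: red_nth)

lemma red_less_iff: assumes "i < length s" "j < length s"
  shows "red s ! i < red s ! j \<longleftrightarrow> s!i < s!j"
proof (cases "s!i < s!j")
  case True then show ?thesis using red_less[OF assms] by simp
next
  case False
  then consider "s!i = s!j" | "s!j < s!i" by linarith
  then show ?thesis
  proof cases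
    case 1 then show ?thesis using red_same[OF assms] by simp
  next
    case 2 then show ?thesis using red_less[OF assms(2,1)] by simp
  qed
qed

lemma red_eq_iff: assumes "i < length s" "j < length s"
  shows "red s ! i = red s ! j \<longleftrightarrow> s!i = s!j"
proof (cases "s!i = s!j")
  case True then show ?thesis using red_same[OF assms] by simp
next
  case False
  then consider "s!i < s!j" | "s!j < s!i" by linarith
  then show ?thesis
  proof cases
    case 1 then show ?thesis using red_less[OF assms] by simp
  next
    case 2 then show ?thesis using red_less[OF assms(2,1)] by simp
  qed
qed

lemma list4: "length s = 4 \<Longrightarrow> \<exists>a b c d. s = [a,b,c,d]"
  by (auto simp: numeral_eq_Suc length_Suc_conv)

lemma red_len: "length (red s) = length s" by (simp add: red_def)

lemma red_pat1: assumes "red s = [0,1,0,1]" shows "\<exists>a b. s = [a,b,a,b] \<and> a < b"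
proof -
  have l: "length s = 4" using red_len[of s] assms by simp
  have "s!0 < s!1" using red_less_iff[of 0 s 1] l assms by simp
  moreover have "s!2 = s!0" using red_eq_iff[of 2 s 0] l assms by simp
  moreover have "s!3 = s!1" using red_eq_iff[of 3 s 1] l assms by simp
  moreover obtain a b c d where "s = [a,b,c,d]" using list4[OF l] by blast
  ultimately show ?thesis by simp
qed

lemma red_pat2: assumes "red s = [0,1,1,2]" shows "\<exists>a b c. s = [a,b,b,c] \<and> a < b \<and> b < c"
proof -
  have l: "length s = 4" using red_len[of s] assms by simp
  have "s!0 < s!1" using red_less_iff[of 0 s 1] l assms by simp
  moreover have "s!1 < s!3" using red_less_iff[of 1 s 3] l assms by simp
  moreover have "s!2 = s!1" using red_eq_iff[of 2 s 1] l assms by simp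
  moreover obtain a b c d where "s = [a,b,c,d]" using list4[OF l] by blast
  ultimately show ?thesis by simp
qed

lemma red_pat3: assumes "red s = [0,1,2,0]" shows "\<exists>a b c. s = [a,b,c,a] \<and> a < b \<and> b < c"
proof -
  have l: "length s = 4" using red_len[of s] assms by simp
  have "s!0 < s!1" using red_less_iff[of 0 s 1] l assms by simp
  moreover have "s!1 < s!2" using red_less_iff[of 1 s 2] l assms by simp
  moreover have "s!3 = s!0" using red_eq_iff[of 3 s 0] l assms by simp
  moreover obtain a b c d where "s = [a,b,c,d]" using list4[OF l] by blast
  ultimately show ?thesis by simp
qed

lemma contains1: "contains_pat x [0,1,0,1] \<longleftrightarrow> (\<exists>a b. a < b \<and> subseq [a,b,a,b] x)"
proof
  assume "contains_pat x [0,1,0,1]"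
  then obtain s where s: "subseq s x" "red s = [0,1,0,1]" by (auto simp: contains_subseq)
  then show "\<exists>a b. a < b \<and> subseq [a,b,a,b] x" using red_pat1 by blast
next
  assume "\<exists>a b. a < b \<and> subseq [a,b,a,b] x"
  then obtain a b where "a < b" "subseq [a,b,a,b] x" by blast
  moreover have "red [a,b,a,b] = [0,1,0,1]" using red_simp1 calculation by blast
  ultimately show "contains_pat x [0,1,0,1]" unfolding contains_subseq by blast
qed

lemma contains2: "contains_pat x [0,1,1,2] \<longleftrightarrow> (\<exists>a b c. a < b \<and> b < c \<and> subseq [a,b,b,c] x)"
proof
  assume "contains_pat x [0,1,1,2]"
  then obtain s where s: "subseq s x" "red s = [0,1,1,2]" by (auto simp: contains_subseq)
  then show "\<exists>a b c. a < b \<and> b < c \<and> subseq [a,b,b,c] x" using red_pat2 by blast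
next
  assume "\<exists>a b c. a < b \<and> b < c \<and> subseq [a,b,b,c] x"
  then obtain a b c where "a < b" "b < c" "subseq [a,b,b,c] x" by blast
  moreover have "red [a,b,b,c] = [0,1,1,2]" using red_simp2 calculation by blast
  ultimately show "contains_pat x [0,1,1,2]" unfolding contains_subseq by blast
qed

lemma contains3: "contains_pat x [0,1,2,0] \<longleftrightarrow> (\<exists>a b c. a < b \<and> b < c \<and> subseq [a,b,c,a] x)"
proof
  assume "contains_pat x [0,1,2,0]"
  then obtain s where s: "subseq s x" "red s = [0,1,2,0]" by (auto simp: contains_subseq)
  then show "\<exists>a b c. a < b \<and> b < c \<and> subseq [a,b,c,a] x" using red_pat3 by blast
next
  assume "\<exists>a b c. a < b \<and> b < c \<and> subseq [a,b,c,a] x"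
  then obtain a b c where "a < b" "b < c" "subseq [a,b,c,a] x" by blast
  moreover have "red [a,b,c,a] = [0,1,2,0]" using red_simp3 calculation by blast
  ultimately show "contains_pat x [0,1,2,0]" unfolding contains_subseq by blast
qed

lemma subseq_snoc_iff:
  "subseq s (x@[v]) \<longleftrightarrow> subseq s x \<or> (s \<noteq> [] \<and> last s = v \<and> subseq (butlast s) x)"
proof (induction x arbitrary: s)
  case Nil
  then show ?case
    by (cases s) (auto simp: subseq_singleton_left)
next
  case (Cons y x)
  show ?case
  proof (cases s)
    case Nil then show ?thesis by simp
  next
    case (Cons a s')
    show ?thesis
    proof (cases "a = y")
      case True
      then show ?thesis using Cons Cons.IH[of s']
        by (cases "s' = []") simp_all
    next
      case False
      then show ?thesis using Cons Cons.IH[of s]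
        by (cases "s' = []") simp_all
    qed
  qed
qed


definition good :: "nat list \<Rightarrow> bool" where
  "good x \<longleftrightarrow> is_ascent_seq x \<and> \<not> contains_pat x [0,1,0,1] \<and> \<not> contains_pat x [0,1,1,2]
     \<and> \<not> contains_pat x [0,1,2,0]"

definition A2 :: "nat list \<Rightarrow> (nat \<times> nat) set" where
  "A2 x = {(a,b). a < b \<and> subseq [a,b] x}"
definition R1s :: "nat list \<Rightarrow> nat set" where
  "R1s x = {b. \<exists>a<b. subseq [a,b,a] x}"
definition Cs :: "nat list \<Rightarrow> nat set" where
  "Cs x = {c. \<exists>a<c. subseq [a,c,c] x}"
definition R3s :: "nat list \<Rightarrow> nat set" where
  "R3s x = {a. \<exists>b c. a < b \<and> b < c \<and> subseq [a,b,c] x}"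

lemma asc_set_snoc:
  assumes "x \<noteq> []"
  shows "{j. Suc j < length (x@[v]) \<and> (x@[v]) ! j < (x@[v]) ! Suc j} =
    {j. Suc j < length x \<and> x ! j < x ! Suc j} \<union> {j. j = length x - 1 \<and> last x < v}"
proof (rule set_eqI)
  fix j
  have lx: "last x = x ! (length x - 1)" using assms by (simp add: last_conv_nth)
  consider "Suc j < length x" | "Suc j = length x" | "Suc j > length x" by linarith
  then show "j \<in> {j. Suc j < length (x@[v]) \<and> (x@[v]) ! j < (x@[v]) ! Suc j} \<longleftrightarrow>
    j \<in> {j. Suc j < length x \<and> x ! j < x ! Suc j} \<union> {j. j = length x - 1 \<and> last x < v}"
  proof cases
    case 1 then have "j \<noteq> length x - 1" by simp
    then show ?thesis using 1 by (simp add: nth_append)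
  next
    case 2 then have "j = length x - 1" by simp
    then show ?thesis using 2 lx by (simp add: nth_append)
  next
    case 3 then have "j \<noteq> length x - 1" using assms by (cases x) auto
    then show ?thesis using 3 by simp
  qed
qed

lemma asc_snoc: assumes "x \<noteq> []"
  shows "asc (x@[v]) = asc x + (if last x < v then 1 else 0)"
proof -
  have fin: "finite {j. Suc j < length x \<and> x ! j < x ! Suc j}" by (rule finite_subset[of _ "{..<length x}"]) auto
  have dis: "{j. Suc j < length x \<and> x ! j < x ! Suc j} \<inter> {j. j = length x - 1 \<and> last x < v} = {}"
    by auto
  have "card {j. j = length x - 1 \<and> last x < v} = (if last x < v then 1 else 0)" by auto
  have nin: "length x - 1 \<notin> {j. Suc j < length x \<and> x ! j < x ! Suc j}" by auto
  then show ?thesis unfolding asc_def asc_set_snoc[OF assms]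
    using fin nin by (simp add: card_Un_disjoint[OF fin _ dis])
qed

lemma ascent_snoc: assumes "x \<noteq> []"
  shows "is_ascent_seq (x@[v]) \<longleftrightarrow> is_ascent_seq x \<and> v \<le> 1 + asc x"
proof
  assume h: "is_ascent_seq (x@[v])"
  have "x ! 0 = 0" using h assms unfolding is_ascent_seq_def by (simp add: nth_append)
  moreover have "x ! i \<le> 1 + asc (take i x)" if "1 \<le> i" "i < length x" for i
    using h that unfolding is_ascent_seq_def
    by (metis (no_types, lifting) butlast_snoc length_append_singleton less_SucI nth_butlast take_butlast)
  moreover have "v \<le> 1 + asc x"
    using h assms unfolding is_ascent_seq_def
    by (metis One_nat_def append_eq_conv_conj le_add2 length_append_singleton length_greater_0_conv lessI linorder_not_le nth_append_length plus_1_eq_Suc not_less_eq_eq)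
  ultimately show "is_ascent_seq x \<and> v \<le> 1 + asc x" using assms unfolding is_ascent_seq_def by blast
next
  assume h: "is_ascent_seq x \<and> v \<le> 1 + asc x"
  show "is_ascent_seq (x@[v])"
    unfolding is_ascent_seq_def
  proof (intro conjI allI impI)
    show "x @ [v] \<noteq> []" by simp
    show "(x @ [v]) ! 0 = 0" using h assms unfolding is_ascent_seq_def by (simp add: nth_append)
    fix i assume i: "1 \<le> i \<and> i < length (x @ [v])"
    show "(x @ [v]) ! i \<le> 1 + asc (take i (x @ [v]))"
    proof (cases "i < length x")
      case True then show ?thesis using h i unfolding is_ascent_seq_def by (simp add: nth_append)
    next
      case False then have "i = length x" using i by simp
      then show ?thesis using h by simp
    qed
  qed
qed

lemma contains1_snoc: "contains_pat (x@[v]) [0,1,0,1] \<longleftrightarrow> contains_pat x [0,1,0,1] \<or> v \<in> R1s x"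
  unfolding contains1 R1s_def by (auto simp: subseq_snoc_iff)
lemma contains2_snoc: "contains_pat (x@[v]) [0,1,1,2] \<longleftrightarrow> contains_pat x [0,1,1,2] \<or> (\<exists>c\<in>Cs x. c < v)"
  unfolding contains2 Cs_def by (auto simp: subseq_snoc_iff)
lemma contains3_snoc: "contains_pat (x@[v]) [0,1,2,0] \<longleftrightarrow> contains_pat x [0,1,2,0] \<or> v \<in> R3s x"
  unfolding contains3 R3s_def by (auto simp: subseq_snoc_iff)

lemma good_snoc: assumes "x \<noteq> []"
  shows "good (x@[v]) \<longleftrightarrow> good x \<and> v \<le> 1 + asc x \<and> v \<notin> R1s x \<and> (\<forall>c\<in>Cs x. \<not> c < v) \<and> v \<notin> R3s x"
  unfolding good_def ascent_snoc[OF assms] contains1_snoc contains2_snoc contains3_snoc by blast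

lemma A2_snoc: "A2 (x@[v]) = A2 x \<union> {(a,v)|a. a \<in> set x \<and> a < v}"
  unfolding A2_def by (auto simp: subseq_snoc_iff subseq_singleton_left)
lemma R1s_snoc: "R1s (x@[v]) = R1s x \<union> {b. (v,b) \<in> A2 x}"
  unfolding A2_def R1s_def by (auto simp: subseq_snoc_iff)
lemma Cs_snoc: "Cs (x@[v]) = Cs x \<union> {c. c = v \<and> (\<exists>a. (a,v) \<in> A2 x)}"
  unfolding A2_def Cs_def by (auto simp: subseq_snoc_iff)
lemma R3s_snoc: "R3s (x@[v]) = R3s x \<union> {a. \<exists>b. (a,b) \<in> A2 x \<and> b < v}"
  unfolding A2_def R3s_def by (auto simp: subseq_snoc_iff)

lemma good_Nil: "\<not> good []" by (simp add: good_def is_ascent_seq_def)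

lemma good_single: "good [0]"
  unfolding good_def is_ascent_seq_def contains1 contains2 contains3
  by (auto dest: list_emb_length)



datatype kind = KZ | KRun | KRep | KDrop | KSeg | KSRun | KSRep

fun succs :: "kind \<Rightarrow> nat \<Rightarrow> (nat \<times> kind \<times> nat) list" where
  "succs KZ k = [(0,KZ,0),(1,KRun,1)]"
| "succs KRun k = [(k-1, if k=1 then KSeg else KDrop, k), (k,KRep,k), (k+1,KRun,k+1)]"
| "succs KRep k = [(k-1,KDrop,k),(k,KRep,k)]"
| "succs KDrop k = [(k-1,KDrop,k)]"
| "succs KSeg k = [(0,KSeg,1),(2,KSRun,2)]"
| "succs KSRun k = (if 3 \<le> k then [(k-1,KDrop,k)] else []) @ [(k,KSRep,k),(k+1,KSRun,k+1)]"
| "succs KSRep k = (if 3 \<le> k then [(k-1,KDrop,k)] else []) @ [(k,KSRep,k)]"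

fun kinv :: "kind \<Rightarrow> nat \<Rightarrow> nat list \<Rightarrow> bool" where
  "kinv KZ k x \<longleftrightarrow> good x \<and> set x = {0} \<and> A2 x = {} \<and> R1s x = {} \<and> Cs x = {} \<and> R3s x = {}
     \<and> asc x = 0 \<and> last x = 0"
| "kinv KRun k x \<longleftrightarrow> good x \<and> 1 \<le> k \<and> set x = {0..k} \<and> A2 x = {(i,j). i<j \<and> j\<le>k} \<and> R1s x = {}
     \<and> Cs x = {} \<and> R3s x = {i. i+2 \<le> k} \<and> asc x = k \<and> last x = k"
| "kinv KRep k x \<longleftrightarrow> good x \<and> 1 \<le> k \<and> set x = {0..k} \<and> A2 x = {(i,j). i<j \<and> j\<le>k} \<and> R1s x = {}
     \<and> Cs x = {k} \<and> R3s x = {i. i+2 \<le> k} \<and> asc x = k \<and> last x = k"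
| "kinv KDrop k x \<longleftrightarrow> good x \<and> 1 \<le> k \<and> set x = {0..k} \<and> A2 x = {(i,j). i<j \<and> j\<le>k}
     \<and> k \<in> R1s x \<and> R1s x \<subseteq> {1,k} \<and> k-1 \<notin> R1s x
     \<and> Cs x \<noteq> {} \<and> Cs x \<subseteq> {k-1,k} \<and> R3s x = {i. i+2 \<le> k} \<and> asc x = k \<and> last x = k-1"
| "kinv KSeg k x \<longleftrightarrow> good x \<and> set x = {0,1} \<and> A2 x = {(0,1)} \<and> R1s x = {1} \<and> Cs x = {} \<and> R3s x = {}
     \<and> asc x = 1 \<and> last x = 0"
| "kinv KSRun k x \<longleftrightarrow> good x \<and> 2 \<le> k \<and> set x = {0..k} \<and> A2 x = {(i,j). i<j \<and> j\<le>k} \<and> R1s x = {1}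
     \<and> Cs x = {} \<and> R3s x = {i. i+2 \<le> k} \<and> asc x = k \<and> last x = k"
| "kinv KSRep k x \<longleftrightarrow> good x \<and> 2 \<le> k \<and> set x = {0..k} \<and> A2 x = {(i,j). i<j \<and> j\<le>k} \<and> R1s x = {1}
     \<and> Cs x = {k} \<and> R3s x = {i. i+2 \<le> k} \<and> asc x = k \<and> last x = k"

lemma inv_good: "kinv K k x \<Longrightarrow> good x"
  by (cases K) auto

lemma inv_ne: "kinv K k x \<Longrightarrow> x \<noteq> []"
  using inv_good good_Nil by blast

lemma step_good_KZ: assumes "kinv KZ k x" shows "good (x@[v]) \<longleftrightarrow> v \<in> fst ` set (succs KZ k)"
proof -
  have g: "good (x@[v]) \<longleftrightarrow> good x \<and> v \<le> 1 + asc x \<and> v \<notin> R1s x \<and> (\<forall>c\<in>Cs x. \<not> c < v) \<and> v \<notin> R3s x"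
    by (rule good_snoc[OF inv_ne[OF assms]])
  show ?thesis unfolding g using assms by auto
qed

lemma step_good_KRun: assumes "kinv KRun k x" shows "good (x@[v]) \<longleftrightarrow> v \<in> fst ` set (succs KRun k)"
proof -
  have g: "good (x@[v]) \<longleftrightarrow> good x \<and> v \<le> 1 + asc x \<and> v \<notin> R1s x \<and> (\<forall>c\<in>Cs x. \<not> c < v) \<and> v \<notin> R3s x"
    by (rule good_snoc[OF inv_ne[OF assms]])
  show ?thesis unfolding g using assms by auto
qed

lemma step_good_KRep: assumes "kinv KRep k x" shows "good (x@[v]) \<longleftrightarrow> v \<in> fst ` set (succs KRep k)"
proof -
  have g: "good (x@[v]) \<longleftrightarrow> good x \<and> v \<le> 1 + asc x \<and> v \<notin> R1s x \<and> (\<forall>c\<in>Cs x. \<not> c < v) \<and> v \<notin> R3s x"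
    by (rule good_snoc[OF inv_ne[OF assms]])
  show ?thesis unfolding g using assms by auto
qed

lemma step_good_KDrop: assumes "kinv KDrop k x" shows "good (x@[v]) \<longleftrightarrow> v \<in> fst ` set (succs KDrop k)"
proof -
  have g: "good (x@[v]) \<longleftrightarrow> good x \<and> v \<le> 1 + asc x \<and> v \<notin> R1s x \<and> (\<forall>c\<in>Cs x. \<not> c < v) \<and> v \<notin> R3s x"
    by (rule good_snoc[OF inv_ne[OF assms]])
  obtain c where c: "c \<in> Cs x" "c \<le> k" using assms by fastforce
  show ?thesis
  proof
    assume "good (x@[v])"
    then have "v \<noteq> k" "\<not> c < v" "\<not> v + 2 \<le> k" using g assms c by auto
    then have "v = k - 1" using c by linarith
    then show "v \<in> fst ` set (succs KDrop k)" by simp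
  next
    assume "v \<in> fst ` set (succs KDrop k)"
    then show "good (x@[v])" unfolding g using assms by auto
  qed
qed

lemma step_good_KSeg: assumes "kinv KSeg k x" shows "good (x@[v]) \<longleftrightarrow> v \<in> fst ` set (succs KSeg k)"
proof -
  have g: "good (x@[v]) \<longleftrightarrow> good x \<and> v \<le> 1 + asc x \<and> v \<notin> R1s x \<and> (\<forall>c\<in>Cs x. \<not> c < v) \<and> v \<notin> R3s x"
    by (rule good_snoc[OF inv_ne[OF assms]])
  show ?thesis unfolding g using assms by auto
qed

lemma step_good_KSRun: assumes "kinv KSRun k x" shows "good (x@[v]) \<longleftrightarrow> v \<in> fst ` set (succs KSRun k)"
proof -
  have g: "good (x@[v]) \<longleftrightarrow> good x \<and> v \<le> 1 + asc x \<and> v \<notin> R1s x \<and> (\<forall>c\<in>Cs x. \<not> c < v) \<and> v \<notin> R3s x"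
    by (rule good_snoc[OF inv_ne[OF assms]])
  show ?thesis unfolding g using assms by auto
qed

lemma step_good_KSRep: assumes "kinv KSRep k x" shows "good (x@[v]) \<longleftrightarrow> v \<in> fst ` set (succs KSRep k)"
proof -
  have g: "good (x@[v]) \<longleftrightarrow> good x \<and> v \<le> 1 + asc x \<and> v \<notin> R1s x \<and> (\<forall>c\<in>Cs x. \<not> c < v) \<and> v \<notin> R3s x"
    by (rule good_snoc[OF inv_ne[OF assms]])
  show ?thesis unfolding g using assms by auto
qed



lemma ex_less_nat: "(\<exists>a::nat. a < k) \<longleftrightarrow> 0 < k" by auto

lemma tr_zz: assumes "kinv KZ k x" shows "kinv KZ (0) (x@[0])"
proof -
  have ne: "x \<noteq> []" by (rule inv_ne[OF assms(1)])
  have gd: "good (x@[0])" using step_good_KZ[OF assms(1)] assms by auto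
  show ?thesis using assms gd unfolding kinv.simps A2_snoc R1s_snoc Cs_snoc R3s_snoc asc_snoc[OF ne]
    by (intro conjI; auto simp: ex_less_nat)
qed


lemma tr_zr: assumes "kinv KZ k x" shows "kinv KRun (1) (x@[1])"
proof -
  have ne: "x \<noteq> []" by (rule inv_ne[OF assms(1)])
  have gd: "good (x@[1])" using step_good_KZ[OF assms(1)] assms by auto
  show ?thesis using assms gd unfolding kinv.simps A2_snoc R1s_snoc Cs_snoc R3s_snoc asc_snoc[OF ne]
    by (intro conjI; auto simp: ex_less_nat)
qed


lemma tr_rs: assumes "kinv KRun k x" "k = 1" shows "kinv KSeg (1) (x@[k-1])"
proof -
  have ne: "x \<noteq> []" by (rule inv_ne[OF assms(1)])
  have gd: "good (x@[k-1])" using step_good_KRun[OF assms(1)] assms by auto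
  show ?thesis using assms gd unfolding kinv.simps A2_snoc R1s_snoc Cs_snoc R3s_snoc asc_snoc[OF ne]
    by (intro conjI; auto simp: ex_less_nat)
qed


lemma tr_rd: assumes "kinv KRun k x" "k \<noteq> 1" shows "kinv KDrop (k) (x@[k-1])"
proof -
  have ne: "x \<noteq> []" by (rule inv_ne[OF assms(1)])
  have gd: "good (x@[k-1])" using step_good_KRun[OF assms(1)] assms by auto
  show ?thesis using assms gd unfolding kinv.simps A2_snoc R1s_snoc Cs_snoc R3s_snoc asc_snoc[OF ne]
    by (intro conjI; auto simp: ex_less_nat)
qed


lemma tr_rp: assumes "kinv KRun k x" shows "kinv KRep (k) (x@[k])"
proof -
  have ne: "x \<noteq> []" by (rule inv_ne[OF assms(1)])
  have gd: "good (x@[k])" using step_good_KRun[OF assms(1)] assms by auto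
  show ?thesis using assms gd unfolding kinv.simps A2_snoc R1s_snoc Cs_snoc R3s_snoc asc_snoc[OF ne]
    by (intro conjI; auto simp: ex_less_nat)
qed


lemma tr_rr: assumes "kinv KRun k x" shows "kinv KRun (k+1) (x@[k+1])"
proof -
  have ne: "x \<noteq> []" by (rule inv_ne[OF assms(1)])
  have gd: "good (x@[k+1])" using step_good_KRun[OF assms(1)] assms by auto
  show ?thesis using assms gd unfolding kinv.simps A2_snoc R1s_snoc Cs_snoc R3s_snoc asc_snoc[OF ne]
    by (intro conjI; auto simp: ex_less_nat)
qed


lemma tr_pd: assumes "kinv KRep k x" shows "kinv KDrop (k) (x@[k-1])"
proof -
  have ne: "x \<noteq> []" by (rule inv_ne[OF assms(1)])
  have gd: "good (x@[k-1])" using step_good_KRep[OF assms(1)] assms by auto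
  show ?thesis using assms gd unfolding kinv.simps A2_snoc R1s_snoc Cs_snoc R3s_snoc asc_snoc[OF ne]
    by (intro conjI; auto simp: ex_less_nat)
qed


lemma tr_pp: assumes "kinv KRep k x" shows "kinv KRep (k) (x@[k])"
proof -
  have ne: "x \<noteq> []" by (rule inv_ne[OF assms(1)])
  have gd: "good (x@[k])" using step_good_KRep[OF assms(1)] assms by auto
  show ?thesis using assms gd unfolding kinv.simps A2_snoc R1s_snoc Cs_snoc R3s_snoc asc_snoc[OF ne]
    by (intro conjI; auto simp: ex_less_nat)
qed


lemma tr_dd: assumes "kinv KDrop k x" shows "kinv KDrop (k) (x@[k-1])"
proof -
  have ne: "x \<noteq> []" by (rule inv_ne[OF assms(1)])
  have gd: "good (x@[k-1])" using step_good_KDrop[OF assms(1)] assms by auto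
  show ?thesis using assms gd unfolding kinv.simps A2_snoc R1s_snoc Cs_snoc R3s_snoc asc_snoc[OF ne]
    by (intro conjI; auto simp: ex_less_nat)
qed


lemma tr_ss: assumes "kinv KSeg k x" shows "kinv KSeg (1) (x@[0])"
proof -
  have ne: "x \<noteq> []" by (rule inv_ne[OF assms(1)])
  have gd: "good (x@[0])" using step_good_KSeg[OF assms(1)] assms by auto
  show ?thesis using assms gd unfolding kinv.simps A2_snoc R1s_snoc Cs_snoc R3s_snoc asc_snoc[OF ne]
    by (intro conjI; auto simp: ex_less_nat)
qed


lemma tr_sr: assumes "kinv KSeg k x" shows "kinv KSRun (2) (x@[2])"
proof -
  have ne: "x \<noteq> []" by (rule inv_ne[OF assms(1)])
  have gd: "good (x@[2])" using step_good_KSeg[OF assms(1)] assms by auto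
  have s: "set x = {0,1}" "A2 x = {(0,1)}" "R1s x = {1}" "Cs x = {}" "R3s x = {}" "asc x = 1" "last x = 0"
    using assms by auto
  have e1: "set (x@[2]) = {0..2}" using s by (simp add: numeral_2_eq_2 atLeast0_atMost_Suc insert_commute)
  have e2: "A2 (x@[2]) = {(i,j). i<j \<and> j \<le> 2}"
    unfolding A2_snoc s by auto
  have e3: "R1s (x@[2]) = {1}" unfolding R1s_snoc s by auto
  have e4: "Cs (x@[2]) = {}" unfolding Cs_snoc s by auto
  have e5: "R3s (x@[2]) = {i. i+2 \<le> 2}" unfolding R3s_snoc s by auto
  have e6: "asc (x@[2]) = 2" unfolding asc_snoc[OF ne] s by simp
  show ?thesis using gd e1 e2 e3 e4 e5 e6 by simp
qed

lemma tr_Rd: assumes "kinv KSRun k x" "3 \<le> k" shows "kinv KDrop (k) (x@[k-1])"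
proof -
  have ne: "x \<noteq> []" by (rule inv_ne[OF assms(1)])
  have gd: "good (x@[k-1])" using step_good_KSRun[OF assms(1)] assms by auto
  show ?thesis using assms gd unfolding kinv.simps A2_snoc R1s_snoc Cs_snoc R3s_snoc asc_snoc[OF ne]
    by (intro conjI; auto simp: ex_less_nat)
qed


lemma tr_Rp: assumes "kinv KSRun k x" shows "kinv KSRep (k) (x@[k])"
proof -
  have ne: "x \<noteq> []" by (rule inv_ne[OF assms(1)])
  have gd: "good (x@[k])" using step_good_KSRun[OF assms(1)] assms by auto
  show ?thesis using assms gd unfolding kinv.simps A2_snoc R1s_snoc Cs_snoc R3s_snoc asc_snoc[OF ne]
    by (intro conjI; auto simp: ex_less_nat)
qed


lemma tr_RR: assumes "kinv KSRun k x" shows "kinv KSRun (k+1) (x@[k+1])"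
proof -
  have ne: "x \<noteq> []" by (rule inv_ne[OF assms(1)])
  have gd: "good (x@[k+1])" using step_good_KSRun[OF assms(1)] assms by auto
  show ?thesis using assms gd unfolding kinv.simps A2_snoc R1s_snoc Cs_snoc R3s_snoc asc_snoc[OF ne]
    by (intro conjI; auto simp: ex_less_nat)
qed


lemma tr_Pd: assumes "kinv KSRep k x" "3 \<le> k" shows "kinv KDrop (k) (x@[k-1])"
proof -
  have ne: "x \<noteq> []" by (rule inv_ne[OF assms(1)])
  have gd: "good (x@[k-1])" using step_good_KSRep[OF assms(1)] assms by auto
  show ?thesis using assms gd unfolding kinv.simps A2_snoc R1s_snoc Cs_snoc R3s_snoc asc_snoc[OF ne]
    by (intro conjI; auto simp: ex_less_nat)
qed


lemma tr_PP: assumes "kinv KSRep k x" shows "kinv KSRep (k) (x@[k])"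
proof -
  have ne: "x \<noteq> []" by (rule inv_ne[OF assms(1)])
  have gd: "good (x@[k])" using step_good_KSRep[OF assms(1)] assms by auto
  show ?thesis using assms gd unfolding kinv.simps A2_snoc R1s_snoc Cs_snoc R3s_snoc asc_snoc[OF ne]
    by (intro conjI; auto simp: ex_less_nat)
qed





lemma step_good: "kinv K k x \<Longrightarrow> good (x@[v]) \<longleftrightarrow> v \<in> fst ` set (succs K k)"
  by (cases K) (simp_all only: step_good_KZ step_good_KRun step_good_KRep step_good_KDrop
      step_good_KSeg step_good_KSRun step_good_KSRep)

lemma step_inv: assumes "kinv K k x" "(v,K',k') \<in> set (succs K k)" shows "kinv K' k' (x@[v])"
proof (cases K)
  case KZ then show ?thesis using assms tr_zz tr_zr by (auto simp del: kinv.simps)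
next
  case KRun then show ?thesis using assms tr_rs tr_rd tr_rp tr_rr by (auto simp del: kinv.simps split: if_splits)
next
  case KRep then show ?thesis using assms tr_pd tr_pp by (auto simp del: kinv.simps)
next
  case KDrop then show ?thesis using assms tr_dd by (auto simp del: kinv.simps)
next
  case KSeg then show ?thesis using assms tr_ss tr_sr by (auto simp del: kinv.simps)
next
  case KSRun then show ?thesis using assms tr_Rd tr_Rp tr_RR by (auto simp del: kinv.simps split: if_splits)
next
  case KSRep then show ?thesis using assms tr_Pd tr_PP by (auto simp del: kinv.simps split: if_splits)
qed

lemma distinct_succs: assumes "kinv K k x" shows "distinct (map fst (succs K k))"
  using assms by (cases K) auto

fun F :: "kind \<Rightarrow> nat \<Rightarrow> nat \<Rightarrow> nat" where
  "F K k 0 = 1"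
| "F K k (Suc m) = sum_list (map (\<lambda>(v,K',k'). F K' k' m) (succs K k))"

definition ext :: "nat list \<Rightarrow> nat \<Rightarrow> nat list set" where
  "ext x m = {ys. length ys = m \<and> good (x@ys)}"

lemma good_prefix: "good (x@ys) \<Longrightarrow> x \<noteq> [] \<Longrightarrow> good x"
proof (induction ys rule: rev_induct)
  case Nil then show ?case by simp
next
  case (snoc y ys)
  then have "good (x@ys)" using good_snoc[of "x@ys" y] by simp
  then show ?case using snoc by blast
qed

lemma ext_Suc: assumes "kinv K k x"
  shows "ext x (Suc m) = (\<Union>e\<in>set (succs K k). (\<lambda>ys. fst e # ys) ` ext (x@[fst e]) m)"
proof
  show "ext x (Suc m) \<subseteq> (\<Union>e\<in>set (succs K k). (\<lambda>ys. fst e # ys) ` ext (x@[fst e]) m)"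
  proof
    fix ys assume "ys \<in> ext x (Suc m)"
    then obtain v ys' where ys: "ys = v # ys'" "length ys' = m" "good (x@[v]@ys')"
      unfolding ext_def by (cases ys) auto
    have "good (x@[v])" using good_prefix[of "x@[v]" ys'] ys(3) by simp
    then obtain e where e: "e \<in> set (succs K k)" "fst e = v" using step_good[OF assms] by auto
    have "ys' \<in> ext (x@[fst e]) m" using ys e unfolding ext_def by simp
    then show "ys \<in> (\<Union>e\<in>set (succs K k). (\<lambda>ys. fst e # ys) ` ext (x@[fst e]) m)"
      using e ys by blast
  qed
next
  show "(\<Union>e\<in>set (succs K k). (\<lambda>ys. fst e # ys) ` ext (x@[fst e]) m) \<subseteq> ext x (Suc m)"
    unfolding ext_def by auto
qed

lemma card_ext: "kinv K k x \<Longrightarrow> finite (ext x m) \<and> card (ext x m) = F K k m"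
proof (induction m arbitrary: K k x)
  case 0
  have "ext x 0 = {[]}" using inv_good[OF 0] unfolding ext_def by auto
  then show ?case by simp
next
  case (Suc m)
  let ?L = "succs K k"
  let ?B = "\<lambda>e. (\<lambda>ys. fst e # ys) ` ext (x@[fst e]) m"
  have IH: "e \<in> set ?L \<Longrightarrow> finite (ext (x@[fst e]) m) \<and> card (ext (x@[fst e]) m) = F (fst (snd e)) (snd (snd e)) m" for e
    using Suc.IH step_inv[OF Suc.prems, of "fst e" "fst (snd e)" "snd (snd e)"] by simp
  have fin: "e \<in> set ?L \<Longrightarrow> finite (?B e)" for e using IH by simp
  have cardB: "e \<in> set ?L \<Longrightarrow> card (?B e) = F (fst (snd e)) (snd (snd e)) m" for e
    using IH by (simp add: card_image)
  have dm: "distinct (map fst ?L)" by (rule distinct_succs[OF Suc.prems])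
  have injf: "inj_on fst (set ?L)" using dm by (simp add: distinct_map)
  have dis: "\<forall>e\<in>set ?L. \<forall>e'\<in>set ?L. e \<noteq> e' \<longrightarrow> ?B e \<inter> ?B e' = {}"
  proof (intro ballI impI)
    fix e e' assume "e \<in> set ?L" "e' \<in> set ?L" "e \<noteq> e'"
    then have "fst e \<noteq> fst e'" using injf by (meson inj_on_eq_iff)
    then show "?B e \<inter> ?B e' = {}" by auto
  qed
  have dL: "distinct ?L" using dm by (simp add: distinct_map)
  have "card (\<Union>e\<in>set ?L. ?B e) = (\<Sum>e\<in>set ?L. card (?B e))"
    by (rule card_UN_disjoint) (use fin dis in auto)
  also have "\<dots> = (\<Sum>e\<in>set ?L. (\<lambda>(v,K',k'). F K' k' m) e)"
    by (rule sum.cong) (auto simp: cardB)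
  also have "\<dots> = sum_list (map (\<lambda>(v,K',k'). F K' k' m) ?L)"
    using dL by (simp add: sum_list_distinct_conv_sum_set)
  finally show ?case using ext_Suc[OF Suc.prems, of m] fin by simp
qed



lemma kinv_start: "kinv KZ 0 [0]"
proof -
  have "A2 [0] = {}" unfolding A2_def by (auto dest: list_emb_length)
  moreover have "R1s [0] = {}" unfolding R1s_def by (auto dest: list_emb_length)
  moreover have "Cs [0] = {}" unfolding Cs_def by (auto dest: list_emb_length)
  moreover have "R3s [0] = {}" unfolding R3s_def by (auto dest: list_emb_length)
  moreover have "asc [0] = 0" unfolding asc_def by simp
  ultimately show ?thesis using good_single by simp
qed

lemma good_set: "{x. is_ascent_seq x \<and> length x = n \<and> (\<forall>p\<in>{[0,1,0,1], [0,1,1,2], [0,1,2,0]}. avoids x p)}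
   = {x. good x \<and> length x = n}"
  unfolding good_def avoids_def by auto

lemma a_P_F: assumes "n \<ge> 1"
  shows "a_P {[0,1,0,1], [0,1,1,2], [0,1,2,0]} n = F KZ 0 (n-1)"
proof -
  have "{x. good x \<and> length x = n} = (\<lambda>ys. 0 # ys) ` ext [0] (n-1)"
  proof
    show "{x. good x \<and> length x = n} \<subseteq> (\<lambda>ys. 0 # ys) ` ext [0] (n-1)"
    proof
      fix x assume x: "x \<in> {x. good x \<and> length x = n}"
      then have "x \<noteq> []" "x ! 0 = 0" unfolding good_def is_ascent_seq_def by auto
      then have "x = 0 # tl x" by (cases x) auto
      moreover have "tl x \<in> ext [0] (n-1)" using x calculation unfolding ext_def
        by (metis (mono_tags, lifting) append_Cons append_Nil length_tl mem_Collect_eq)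
      ultimately show "x \<in> (\<lambda>ys. 0 # ys) ` ext [0] (n-1)" by blast
    qed
  next
    show "(\<lambda>ys. 0 # ys) ` ext [0] (n-1) \<subseteq> {x. good x \<and> length x = n}"
      using assms unfolding ext_def by auto
  qed
  then have "a_P {[0,1,0,1], [0,1,1,2], [0,1,2,0]} n = card (ext [0] (n-1))"
    unfolding a_P_def good_set by (simp add: card_image)
  then show ?thesis using card_ext[OF kinv_start] by simp
qed

lemma F_Drop: "F KDrop k m = 1"
  by (induction m) auto

lemma F_Rep: "F KRep k m = m + 1"
  by (induction m) (auto simp: F_Drop)

lemma F_SRep: "F KSRep k m = (if 3 \<le> k then m + 1 else 1)"
  by (induction m) (auto simp: F_Drop)

lemma F_Run: "k \<ge> 2 \<Longrightarrow> 2 * F KRun k m = (m+1)*(m+2)"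
proof (induction m arbitrary: k)
  case 0 then show ?case by simp
next
  case (Suc m)
  have "F KRun k (Suc m) = F KDrop k m + F KRep k m + F KRun (k+1) m" using Suc.prems by simp
  then show ?case using Suc.IH[of "k+1"] Suc.prems by (simp add: F_Drop F_Rep algebra_simps)
qed

lemma F_SRun: "k \<ge> 3 \<Longrightarrow> 2 * F KSRun k m = (m+1)*(m+2)"
proof (induction m arbitrary: k)
  case 0 then show ?case by simp
next
  case (Suc m)
  have "F KSRun k (Suc m) = F KDrop k m + F KSRep k m + F KSRun (k+1) m" using Suc.prems by simp
  then show ?case using Suc.IH[of "k+1"] Suc.prems by (simp add: F_Drop F_SRep algebra_simps)
qed

lemma F_SRun2: "2 * F KSRun 2 m = 2 + m*(m+1)"
proof (cases m)
  case 0 then show ?thesis by simp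
next
  case (Suc j)
  have "F KSRun 2 (Suc j) = F KSRep 2 j + F KSRun 3 j" by (simp add: numeral_eq_Suc)
  then show ?thesis using F_SRun[of 3 j] Suc by (simp add: F_SRep algebra_simps)
qed

lemma F_Seg: "6 * real (F KSeg k m) = 6 + 6 * real m + (real m - 1) * real m * (real m + 1)"
proof (induction m arbitrary: k)
  case 0 then show ?case by simp
next
  case (Suc m)
  have "F KSeg k (Suc m) = F KSeg 1 m + F KSRun 2 m" by simp
  then have "6 * real (F KSeg k (Suc m)) = 6 * real (F KSeg 1 m) + 3 * real (2 * F KSRun 2 m)" by simp
  also have "\<dots> = 6 + 6 * real m + (real m - 1) * real m * (real m + 1) + 3 * (2 + real m * (real m + 1))"
    using Suc.IH[of 1] F_SRun2[of m] by (metis of_nat_add of_nat_mult of_nat_numeral of_nat_1)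
  finally show ?case by (simp add: algebra_simps)
qed

lemma F_Run1: "F KRun 1 (Suc m) = F KSeg 1 m + F KRep 1 m + F KRun 2 m"
  by (simp add: numeral_2_eq_2)

lemma F_Z: "F KZ k (Suc m) = F KZ 0 m + F KRun 1 m"
  by simp

lemma F_Z_closed: "24 * real (F KZ 0 (Suc j)) =
   (real j + 2) ^ 4 - 6 * (real j + 2) ^ 3 + 47 * (real j + 2) ^ 2 - 114 * (real j + 2) + 120"
proof (induction j)
  case 0
  have "F KZ 0 1 = 2" by (simp add: numeral_eq_Suc)
  then show ?case by simp
next
  case (Suc j)
  have r1: "F KRun 1 (Suc j) = F KSeg 1 j + F KRep 1 j + F KRun 2 j" by (rule F_Run1)
  have "24 * real (F KZ 0 (Suc (Suc j))) = 24 * real (F KZ 0 (Suc j)) + 4 * (6 * real (F KSeg 1 j))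
      + 24 * real (F KRep 1 j) + 12 * real (2 * F KRun 2 j)"
    using F_Z[of 0 "Suc j"] r1 by simp
  also have "\<dots> = ((real j + 2) ^ 4 - 6 * (real j + 2) ^ 3 + 47 * (real j + 2) ^ 2 - 114 * (real j + 2) + 120)
      + 4 * (6 + 6 * real j + (real j - 1) * real j * (real j + 1)) + 24 * (real j + 1)
      + 12 * ((real j + 1) * (real j + 2))"
  proof -
    have h: "real (2 * F KRun 2 j) = (real j + 1) * (real j + 2)"
      using arg_cong[OF F_Run[of 2 j], of real] by (simp add: algebra_simps)
    show ?thesis using Suc.IH F_Seg[of 1 j] h by (simp add: F_Rep)
  qed
  finally show ?case by (simp add: algebra_simps power2_eq_square power3_eq_cube power4_eq_xxxx)
qed


theorem theorem4p1:
  shows "a_P {[0,1,0,1], [0,1,1,2], [0,1,2,0]} 1 = 1 \<and>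
    (\<forall>n::nat. n \<ge> 2 \<longrightarrow>
      real (a_P {[0,1,0,1], [0,1,1,2], [0,1,2,0]} n) =
        (real n ^ 4 - 6 * real n ^ 3 + 47 * real n ^ 2 - 114 * real n + 120) / 24)"
proof (intro conjI allI impI)
  show "a_P {[0,1,0,1], [0,1,1,2], [0,1,2,0]} 1 = 1" using a_P_F[of 1] by simp
next
  fix n :: nat assume n: "n \<ge> 2"
  define j where "j = n - 2"
  have nj: "n - 1 = Suc j" "real n = real j + 2" using n unfolding j_def by auto
  have "a_P {[0,1,0,1], [0,1,1,2], [0,1,2,0]} n = F KZ 0 (Suc j)" using a_P_F[of n] n nj by simp
  then show "real (a_P {[0,1,0,1], [0,1,1,2], [0,1,2,0]} n) =
        (real n ^ 4 - 6 * real n ^ 3 + 47 * real n ^ 2 - 114 * real n + 120) / 24"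
    using F_Z_closed[of j] nj(2) by simp
qed

end
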